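(* Let $N$ be a simply connected $2$-step nilpotent Lie group with Lie algebra $\mathfrak n$ and a left-invariant Lorentzian metric $\langle\cdot,\cdot\rangle$ of $pH$-type whose center $\mathfrak Z$ is positive definite, and let $\mathfrak E=\mathfrak Z^{\perp}$ (which then contains the timelike direction). Then $\dim\mathfrak Z+1\le\dim\mathfrak E$.
   Context: For $y\in\mathfrak n$ let $J_y$ be defined by $\langle J_y x,w\rangle=\langle y,[x,w]\rangle$ for all $x,w$. Here $\mathfrak n=\mathfrak Z\oplus\mathfrak E$ orthogonally; choose orthonormal bases $\{z_\alpha\}$ of $\mathfrak Z$, $\{e_a\}$ of $\mathfrak E$, $\varepsilon_\alpha=\langle z_\alpha,z_\alpha\rangle$, $\bar\varepsilon_a=\langle e_a,e_a\rangle$. The involution $\iota$ is given by $\iota z_\alpha=\varepsilon_\alpha z_\alpha$, $\iota e_a=\bar\varepsilon_a e_a$, and $j(y)=\iota\circ J_{\iota y}$. The metric is of $pH$-type if $j(z)^2=-\langle z,\iota z\rangle I$ (on $\mathfrak E$) for all $z$ in the center. *)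

theory Defs
  imports "HOL-Analysis.Analysis"
begin

text \<open>A finite-dimensional real Lie algebra is modelled as a type of class
euclidean_space (used only as a finite-dimensional real vector space; its own
inner product plays no role) with a bilinear bracket.\<close>

definition lie_algebra :: "('a::euclidean_space \<Rightarrow> 'a \<Rightarrow> 'a) \<Rightarrow> bool" where
  "lie_algebra br \<longleftrightarrow> bilinear br \<and> (\<forall>x. br x x = 0) \<and>
     (\<forall>x y z. br x (br y z) + br y (br z x) + br z (br x y) = 0)"

definition two_step_nilpotent :: "('a::euclidean_space \<Rightarrow> 'a \<Rightarrow> 'a) \<Rightarrow> bool" where
  "two_step_nilpotent br \<longleftrightarrow> (\<forall>x y z. br x (br y z) = 0) \<and> (\<exists>x y. br x y \<noteq> 0)"

definition center :: "('a::euclidean_space \<Rightarrow> 'a \<Rightarrow> 'a) \<Rightarrow> 'a set" where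
  "center br = {x. \<forall>y. br x y = 0}"

text \<open>Lorentzian scalar product: symmetric bilinear form with a timelike vector t
such that g is positive definite on the g-orthogonal complement of t
(equivalently: nondegenerate of index 1).\<close>
definition lorentzian :: "('a::euclidean_space \<Rightarrow> 'a \<Rightarrow> real) \<Rightarrow> bool" where
  "lorentzian g \<longleftrightarrow> bilinear g \<and> (\<forall>x y. g x y = g y x) \<and>
     (\<exists>t. g t t < 0 \<and> (\<forall>x. g t x = 0 \<longrightarrow> x \<noteq> 0 \<longrightarrow> g x x > 0))"

definition orth_compl :: "('a \<Rightarrow> 'a \<Rightarrow> real) \<Rightarrow> 'a set \<Rightarrow> 'a set" where
  "orth_compl g S = {x. \<forall>z\<in>S. g x z = 0}"

definition Jmap :: "('a \<Rightarrow> 'a \<Rightarrow> real) \<Rightarrow> ('a \<Rightarrow> 'a \<Rightarrow> 'a) \<Rightarrow> 'a \<Rightarrow> 'a \<Rightarrow> 'a" where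
  "Jmap g br y x = (THE v. \<forall>w. g v w = g y (br x w))"

definition adapted_orthonormal_basis ::
  "('a::euclidean_space \<Rightarrow> 'a \<Rightarrow> real) \<Rightarrow> 'a set \<Rightarrow> 'a set \<Rightarrow> 'a set \<Rightarrow> bool" where
  "adapted_orthonormal_basis g Z E B \<longleftrightarrow> finite B \<and> independent B \<and> span B = UNIV \<and>
     (\<forall>b\<in>B. g b b = 1 \<or> g b b = -1) \<and>
     (\<forall>b\<in>B. \<forall>c\<in>B. b \<noteq> c \<longrightarrow> g b c = 0) \<and>
     (\<forall>b\<in>B. b \<in> Z \<or> b \<in> E)"

text \<open>The involution iota: iota b = g(b,b) b for b in B, extended linearly;
explicitly iota x = sum over b of g(x,b) b.\<close>
definition iota :: "('a::euclidean_space \<Rightarrow> 'a \<Rightarrow> real) \<Rightarrow> 'a set \<Rightarrow> 'a \<Rightarrow> 'a" where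
  "iota g B x = (\<Sum>b\<in>B. g x b *\<^sub>R b)"

definition jmap :: "('a::euclidean_space \<Rightarrow> 'a \<Rightarrow> real) \<Rightarrow> ('a \<Rightarrow> 'a \<Rightarrow> 'a) \<Rightarrow> 'a set \<Rightarrow> 'a \<Rightarrow> 'a \<Rightarrow> 'a" where
  "jmap g br B y = iota g B \<circ> Jmap g br (iota g B y)"

definition pH_type :: "('a::euclidean_space \<Rightarrow> 'a \<Rightarrow> real) \<Rightarrow> ('a \<Rightarrow> 'a \<Rightarrow> 'a) \<Rightarrow> 'a set \<Rightarrow> bool" where
  "pH_type g br B \<longleftrightarrow> (\<forall>z\<in>center br. \<forall>x\<in>orth_compl g (center br).
     jmap g br B z (jmap g br B z x) = - g z (iota g B z) *\<^sub>R x)"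

end

theory Submission
  imports Defs
begin

lemma lin_l: "bilinear h \<Longrightarrow> linear (\<lambda>x. h x y)" by (simp add: bilinear_def)
lemma lin_r: "bilinear h \<Longrightarrow> linear (\<lambda>y. h x y)" by (simp add: bilinear_def)

lemma ortho_expand:
  assumes bil: "bilinear g" and ob: "adapted_orthonormal_basis g Z E B"
  shows "v = (\<Sum>b\<in>B. (g b b * g v b) *\<^sub>R b)"
proof -
  have fin: "finite B" and sp: "span B = UNIV" and nm: "\<forall>b\<in>B. g b b = 1 \<or> g b b = -1"
    and orth: "\<forall>b\<in>B. \<forall>c\<in>B. b \<noteq> c \<longrightarrow> g b c = 0"
    using ob by (auto simp: adapted_orthonormal_basis_def)
  obtain c where v: "v = (\<Sum>b\<in>B. c b *\<^sub>R b)" using span_finite[OF fin] sp by auto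
  have "g v b' = c b' * g b' b'" if b': "b' \<in> B" for b'
  proof -
    have "g v b' = (\<Sum>b\<in>B. c b * g b b')"
      unfolding v by (simp add: linear_sum[OF lin_l[OF bil, of b']] linear_cmul[OF lin_l[OF bil, of b']])
    also have "\<dots> = c b' * g b' b' + (\<Sum>b\<in>B - {b'}. c b * g b b')"
      using sum.remove[OF fin b'] by simp
    also have "(\<Sum>b\<in>B - {b'}. c b * g b b') = 0"
      using orth b' by (intro sum.neutral) auto
    finally show ?thesis by simp
  qed
  have "g b b * g v b = c b" if "b \<in> B" for b
  proof -
    have "g b b * g b b = 1" using nm that by auto
    then show ?thesis using \<open>b \<in> B \<Longrightarrow> g v b = c b * g b b\<close> that
      by (simp add: algebra_simps)
  qed
  then show ?thesis unfolding v by (intro sum.cong) auto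
qed

lemma Jmap_formula:
  assumes bil: "bilinear g" and sym: "\<forall>x y. g x y = g y x" and bbr: "bilinear br"
    and ob: "adapted_orthonormal_basis g Z E B"
  shows "Jmap g br y x = (\<Sum>b\<in>B. (g b b * g y (br x b)) *\<^sub>R b)"
    and "g (Jmap g br y x) w = g y (br x w)"
proof -
  have fin: "finite B" using ob by (auto simp: adapted_orthonormal_basis_def)
  let ?v = "(\<Sum>b\<in>B. (g b b * g y (br x b)) *\<^sub>R b)"
  have ex: "\<forall>w. g ?v w = g y (br x w)"
  proof
    fix w
    have lf: "linear (\<lambda>w. g y (br x w))"
      using linear_compose[OF lin_r[OF bbr] lin_r[OF bil]] by (simp add: o_def)
    have "g ?v w = (\<Sum>b\<in>B. (g b b * g y (br x b)) * g b w)"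
      by (simp add: linear_sum[OF lin_l[OF bil, of w]] linear_cmul[OF lin_l[OF bil, of w]])
    also have "\<dots> = (\<Sum>b\<in>B. (g b b * g w b) * g y (br x b))"
      using sym by (intro sum.cong) auto
    also have "\<dots> = g y (br x (\<Sum>b\<in>B. (g b b * g w b) *\<^sub>R b))"
      by (simp add: linear_sum[OF lf] linear_cmul[OF lf])
    also have "\<dots> = g y (br x w)" using ortho_expand[OF bil ob, of w, symmetric] by simp
    finally show "g ?v w = g y (br x w)" .
  qed
  have un: "u = ?v" if "\<forall>w. g u w = g y (br x w)" for u
  proof -
    have "\<forall>w. g (u - ?v) w = 0" using that ex bilinear_lsub[OF bil] by simp
    then have "u - ?v = 0" using ortho_expand[OF bil ob, of "u - ?v"] by simp
    then show ?thesis by simp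
  qed
  have "Jmap g br y x = ?v" unfolding Jmap_def
    by (rule the_equality[where P="\<lambda>v. \<forall>w. g v w = g y (br x w)", OF ex un]) assumption
  then show "Jmap g br y x = ?v" "g (Jmap g br y x) w = g y (br x w)" using ex by auto
qed

theorem mainTheorem2:
  fixes br :: "'a::euclidean_space \<Rightarrow> 'a \<Rightarrow> 'a" and g :: "'a \<Rightarrow> 'a \<Rightarrow> real" and B :: "'a set"
  assumes "lie_algebra br"
    and "two_step_nilpotent br"
    and "lorentzian g"
    and "\<forall>z\<in>center br. z \<noteq> 0 \<longrightarrow> g z z > 0"
    and "adapted_orthonormal_basis g (center br) (orth_compl g (center br)) B"
    and "pH_type g br B"
  shows "dim (center br) + 1 \<le> dim (orth_compl g (center br))"
proof -
  define Z where "Z = center br"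
  define E where "E = orth_compl g Z"
  have bbr: "bilinear br" and alt: "\<And>x. br x x = 0" using assms(1) by (auto simp: lie_algebra_def)
  have bil: "bilinear g" and sym: "\<forall>x y. g x y = g y x" using assms(3) by (auto simp: lorentzian_def)
  have ob: "adapted_orthonormal_basis g Z E B" using assms(5) by (simp add: Z_def E_def)
  have pos: "\<And>z. z \<in> Z \<Longrightarrow> z \<noteq> 0 \<Longrightarrow> g z z > 0" using assms(4) by (simp add: Z_def)
  have fin: "finite B" and indB: "independent B" and spB: "span B = UNIV"
    and nm: "\<forall>b\<in>B. g b b = 1 \<or> g b b = -1" and ZE: "\<forall>b\<in>B. b \<in> Z \<or> b \<in> E"
    using ob by (auto simp: adapted_orthonormal_basis_def)
  have B0: "0 \<notin> B" using indB dependent_zero by blast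
  have anti: "br x w = - br w x" for x w
  proof -
    have "br (x + w) (x + w) = br x x + br x w + (br w x + br w w)"
      by (simp add: bilinear_ladd[OF bbr] bilinear_radd[OF bbr])
    then have "br x w + br w x = 0" using alt[of "x+w"] alt[of x] alt[of w] by simp
    then show ?thesis by (simp add: eq_neg_iff_add_eq_0)
  qed
  have subZ: "subspace Z"
    unfolding subspace_def Z_def center_def
    by (auto simp: bilinear_lzero[OF bbr] bilinear_ladd[OF bbr] bilinear_lmul[OF bbr])
  have subE: "subspace E"
    unfolding subspace_def E_def orth_compl_def
    by (auto simp: bilinear_lzero[OF bil] bilinear_ladd[OF bil] bilinear_lmul[OF bil])
  have lin_iota: "linear (iota g B)"
    by (rule linearI) (simp_all add: iota_def bilinear_ladd[OF bil] bilinear_lmul[OF bil]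
        scaleR_add_left sum.distrib scaleR_sum_right)
  have Jf: "\<And>y x. Jmap g br y x = (\<Sum>b\<in>B. (g b b * g y (br x b)) *\<^sub>R b)"
    using Jmap_formula(1)[OF bil sym bbr ob] by blast
  have Jc: "\<And>y x w. g (Jmap g br y x) w = g y (br x w)"
    using Jmap_formula(2)[OF bil sym bbr ob] by blast
  have lin_Jy: "linear (\<lambda>y. Jmap g br y x)" for x
    unfolding Jf
    by (rule linearI) (simp_all add: bilinear_ladd[OF bil] bilinear_lmul[OF bil]
        scaleR_add_left sum.distrib scaleR_sum_right algebra_simps)
  have lin_Jx: "linear (\<lambda>x. Jmap g br y x)" for y
    unfolding Jf
    by (rule linearI) (simp_all add: bilinear_ladd[OF bbr] bilinear_lmul[OF bbr]
        bilinear_radd[OF bil] bilinear_rmul[OF bil]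
        scaleR_add_left sum.distrib scaleR_sum_right algebra_simps)
  have iotaZ: "iota g B z = z" if "z \<in> Z" for z
  proof -
    have "g b b * g z b = g z b" if "b \<in> B" for b
    proof (cases "b \<in> Z")
      case True
      then have "g b b > 0" using pos B0 \<open>b \<in> B\<close> by auto
      then have "g b b = 1" using nm \<open>b \<in> B\<close> by force
      then show ?thesis by simp
    next
      case False
      then have "b \<in> E" using ZE \<open>b \<in> B\<close> by auto
      then have "g b z = 0" using \<open>z \<in> Z\<close> by (auto simp: E_def orth_compl_def)
      then show ?thesis using sym by simp
    qed
    then have "iota g B z = (\<Sum>b\<in>B. (g b b * g z b) *\<^sub>R b)"
      unfolding iota_def by (intro sum.cong) auto
    also have "\<dots> = z" using ortho_expand[OF bil ob, of z] by simp
    finally show ?thesis .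
  qed
  have iotaE: "iota g B v \<in> E" if "v \<in> E" for v
    unfolding iota_def
  proof (rule subspace_sum[OF subE])
    fix b assume "b \<in> B"
    show "g v b *\<^sub>R b \<in> E"
    proof (cases "b \<in> Z")
      case True
      then have "g v b = 0" using \<open>v \<in> E\<close> by (auto simp: E_def orth_compl_def)
      then show ?thesis using subspace_0[OF subE] by simp
    next
      case False
      then show ?thesis using ZE \<open>b \<in> B\<close> subspace_scale[OF subE] by auto
    qed
  qed
  have JE: "Jmap g br y x \<in> E" for y x
  proof -
    have "g (Jmap g br y x) w = 0" if "w \<in> Z" for w
    proof -
      have "br w x = 0" using that by (simp add: Z_def center_def)
      then have "br x w = 0" using anti[of x w] by simp
      then show ?thesis using Jc bilinear_rzero[OF bil] by simp
    qed
    then show ?thesis by (simp add: E_def orth_compl_def)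
  qed
  have jE: "jmap g br B z x \<in> E" for z x
    unfolding jmap_def using iotaE JE by simp
  have lin_jz: "linear (\<lambda>z. jmap g br B z x)" for x
  proof -
    have "linear (iota g B \<circ> (\<lambda>y. Jmap g br y x) \<circ> iota g B)"
      by (intro linear_compose lin_iota lin_Jy)
    then show ?thesis by (simp add: jmap_def o_def)
  qed
  have lin_jx: "linear (jmap g br B z)" for z
  proof -
    have "linear (iota g B \<circ> (\<lambda>x. Jmap g br (iota g B z) x))"
      by (intro linear_compose lin_iota lin_Jx)
    then show ?thesis by (simp add: jmap_def o_def)
  qed
  have pH: "jmap g br B z (jmap g br B z x) = - g z z *\<^sub>R x" if "z \<in> Z" "x \<in> E" for z x
    using assms(6) that iotaZ[OF \<open>z \<in> Z\<close>] by (auto simp: pH_type_def Z_def E_def)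
  obtain x where xE: "x \<in> E" and x0: "x \<noteq> 0"
  proof (rule ccontr)
    assume "\<not> thesis"
    then have E0: "\<And>x. x \<in> E \<Longrightarrow> x = 0" using that by blast
    have "B \<subseteq> Z" using ZE E0 B0 by auto
    then have "span B \<subseteq> Z" using subZ by (simp add: span_minimal)
    then have "\<forall>x. x \<in> Z" using spB by auto
    then show False using assms(2) by (auto simp: two_step_nilpotent_def Z_def center_def)
  qed
  define L where "L = (\<lambda>z. jmap g br B z x)"
  have linL: "linear L" unfolding L_def by (rule lin_jz)
  have key: "a = 0 \<and> z = 0" if "z \<in> Z" "L z = a *\<^sub>R x" for z a
  proof -
    have "jmap g br B z (L z) = a *\<^sub>R L z"
      using that(2) linear_cmul[OF lin_jx[of z]] by (simp add: L_def)
    then have "- g z z *\<^sub>R x = (a * a) *\<^sub>R x"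
      using pH[OF that(1) xE] that(2) by (simp add: L_def)
    then have e: "(a * a) *\<^sub>R x = - (g z z *\<^sub>R x)" by simp
    have "(a * a + g z z) *\<^sub>R x = - (g z z *\<^sub>R x) + g z z *\<^sub>R x"
      by (simp only: scaleR_add_left e)
    then have "(a * a + g z z) *\<^sub>R x = 0" by simp
    then have h: "a * a + g z z = 0" using x0 by simp
    have "g z z \<ge> 0"
    proof (cases "z = 0")
      case True then show ?thesis by (simp add: bilinear_lzero[OF bil])
    next
      case False then show ?thesis using pos[OF that(1)] by simp
    qed
    moreover have "a * a \<ge> 0" by simp
    ultimately have "a * a = 0" "g z z = 0" using h by linarith+
    then have "a = 0" "g z z = 0" by simp_all
    then show ?thesis using pos[OF that(1)] by force
  qed
  have spZ: "span Z = Z" using subZ by simp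
  have injL: "inj_on L (span Z)"
    unfolding spZ
  proof (rule inj_onI)
    fix z1 z2 assume z: "z1 \<in> Z" "z2 \<in> Z" "L z1 = L z2"
    have "L (z1 - z2) = 0 *\<^sub>R x" using z(3) linear_diff[OF linL] by simp
    then have "z1 - z2 = 0" using key[of "z1 - z2" 0] subspace_diff[OF subZ z(1) z(2)] by blast
    then show "z1 = z2" by simp
  qed
  have dimL: "dim (L ` Z) = dim Z" using dim_image_eq[OF linL injL] .
  have subL: "subspace (L ` Z)" using linear_subspace_image[OF linL subZ] .
  have xnot: "x \<notin> span (L ` Z)"
  proof
    assume "x \<in> span (L ` Z)"
    then have "x \<in> L ` Z" using subL span_eq_iff by blast
    then obtain z where "z \<in> Z" "x = L z" by auto
    then have "(1::real) = 0" using key[of z 1] by simp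
    then show False by simp
  qed
  have "dim (insert x (L ` Z)) = dim Z + 1" using dim_insert[of x "L ` Z"] xnot dimL by simp
  moreover have "insert x (L ` Z) \<subseteq> E" using xE jE by (auto simp: L_def)
  ultimately have "dim Z + 1 \<le> dim E" using dim_subset by metis
  then show ?thesis by (simp add: Z_def E_def)
qed

end
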